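(* Work in the upper half-space model $\{(x,y,z): z>0\}$ of $\mathbb{H}^3$, where the height of a point $(x,y,z)$ is $\log z$. Let $\gamma$ be a non-vertical geodesic whose highest point has height $0$, and let $v_0 \in N^1(\gamma)$ be the unit normal vector to $\gamma$ based at its highest point and pointing straight up. Let $v \in N^1(\gamma)$, let $h$ be the height of the highest point of the geodesic ray starting at $v$, and write $v - v_0 = x + i\theta \in \mathbb{C}/2\pi i\mathbb{Z}$ with $|\theta| \le \pi$. Then $|x| < 2e^{-h}$ always, and $|\theta| \le 2e^{-h}$ whenever $h > 0$.
   Context: $N^1(\gamma)$ is the unit normal bundle of $\gamma$; it is a torsor for $\mathbb{C}/2\pi i\mathbb{Z}$, where the real part translates the base point along $\gamma$ (signed distance) and the imaginary part rotates the normal vector about $\gamma$. For $v, v_0 \in N^1(\gamma)$, $v - v_0$ denotes the unique element of $\mathbb{C}/2\pi i\mathbb{Z}$ carrying $v_0$ to $v$. *)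

theory Defs
  imports "HOL-Analysis.Analysis"
begin

type_synonym pt3 = "real \<times> real \<times> real"

definition zc :: "pt3 \<Rightarrow> real" where "zc p = snd (snd p)"

definition in_H3 :: "pt3 \<Rightarrow> bool" where "in_H3 p \<longleftrightarrow> zc p > 0"

definition height :: "pt3 \<Rightarrow> real" where "height p = ln (zc p)"

definition hdist :: "pt3 \<Rightarrow> pt3 \<Rightarrow> real" where
  "hdist p q = arcosh (1 + (norm (p - q))\<^sup>2 / (2 * zc p * zc q))"

definition geodesic_ray :: "(real \<Rightarrow> pt3) \<Rightarrow> pt3 \<Rightarrow> pt3 \<Rightarrow> bool" where
  "geodesic_ray r p w \<longleftrightarrow>
     r 0 = p \<and> (\<forall>s\<ge>0. in_H3 (r s)) \<and>
     (\<forall>s\<ge>0. \<forall>t\<ge>0. hdist (r s) (r t) = \<bar>s - t\<bar>) \<and>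
     (\<exists>k>0. (r has_vector_derivative (k *\<^sub>R w)) (at 0 within {0..}))"

definition ray_top_height :: "(real \<Rightarrow> pt3) \<Rightarrow> real" where
  "ray_top_height r = (SUP s\<in>{0..}. height (r s))"

text \<open>The non-vertical geodesic gamma whose highest point (height 0) lies above the
  boundary point (c1,c2), contained in the vertical plane through (c1,c2) with unit
  horizontal direction (u1,u2); parametrised by signed arclength s from its highest point.\<close>
definition gam :: "real \<Rightarrow> real \<Rightarrow> real \<Rightarrow> real \<Rightarrow> real \<Rightarrow> pt3" where
  "gam c1 c2 u1 u2 s = (c1 + tanh s * u1, c2 + tanh s * u2, 1 / cosh s)"

text \<open>Parallel unit normal frame along gamma (Euclidean directions):
  nv is the normal inside the vertical plane of gamma (pointing straight up at the
  top of gamma), nh the horizontal normal to that plane. Both are parallel along gamma.\<close>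
definition nv :: "real \<Rightarrow> real \<Rightarrow> real \<Rightarrow> pt3" where
  "nv u1 u2 s = (tanh s * u1, tanh s * u2, 1 / cosh s)"

definition nh :: "real \<Rightarrow> real \<Rightarrow> pt3" where
  "nh u1 u2 = (- u2, u1, 0)"

text \<open>The element v of N^1(gamma) with v - v0 = x + i theta, where v0 is the upward unit
  normal at the top of gamma: base point gam x, direction cos theta nv + sin theta nh.\<close>
definition nb_base :: "real \<Rightarrow> real \<Rightarrow> real \<Rightarrow> real \<Rightarrow> real \<Rightarrow> pt3" where
  "nb_base c1 c2 u1 u2 x = gam c1 c2 u1 u2 x"

definition nb_dir :: "real \<Rightarrow> real \<Rightarrow> real \<Rightarrow> real \<Rightarrow> pt3" where
  "nb_dir u1 u2 x \<theta> = cos \<theta> *\<^sub>R nv u1 u2 x + sin \<theta> *\<^sub>R nh u1 u2"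

end

theory Submission
  imports Defs "HOL-Real_Asymp.Real_Asymp"
begin
lemma alg:
  fixes a1 a2 a3 v1 v2 v3 p y C S :: real
  assumes p: "p > 0" and y: "y > 0"
    and A: "a1^2+a2^2+a3^2 = 2*p*y*(C-1)"
    and B: "(2*(a1 * v1+a2 * v2+a3 * v3)*(2*p*y) - (a1^2+a2^2+a3^2)*(2 * v3*y))/(2*p*y)^2 = -S"
    and V: "v1^2+v2^2+v3^2 = p^2"
    and CS: "C^2 - S^2 = 1"
    and a3: "a3 = p - y"
  shows "y*(p*C - S * v3) = p^2"
proof -
  define g1 where "g1 = a1/(p*y)"
  define g2 where "g2 = a2/(p*y)"
  define g3 where "g3 = a3/(p*y) - (C-1)/p"
  have B': "(a1 * v1+a2 * v2+a3 * v3)/(p*y) - (a1^2+a2^2+a3^2) * v3/(2*p^2*y) = -S"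
  proof -
    have "(2*(a1 * v1+a2 * v2+a3 * v3)*(2*p*y) - (a1^2+a2^2+a3^2)*(2 * v3*y))/(2*p*y)^2
       = (a1 * v1+a2 * v2+a3 * v3)/(p*y) - (a1^2+a2^2+a3^2) * v3/(2*p^2*y)"
      using p y by (simp add: field_simps power2_eq_square)
    then show ?thesis using B by simp
  qed
  have h1: "g1 * v1 + g2 * v2 + g3 * v3 = -S"
  proof -
    have e: "(a1^2+a2^2+a3^2)/(2*p^2*y) = (C-1)/p"
      unfolding A using p y by (simp add: field_simps power2_eq_square)
    have "g1 * v1 + g2 * v2 + g3 * v3 = (a1 * v1+a2 * v2+a3 * v3)/(p*y) - ((C-1)/p) * v3"
      unfolding g1_def g2_def g3_def using p y by (simp add: field_simps)
    also have "\<dots> = (a1 * v1+a2 * v2+a3 * v3)/(p*y) - (a1^2+a2^2+a3^2) * v3/(2*p^2*y)"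
      by (simp add: e[symmetric])
    finally show ?thesis using B' by simp
  qed
  have h2: "g1^2+g2^2+g3^2 = S^2/p^2"
  proof -
    have "g1^2+g2^2+g3^2 = (a1^2+a2^2+a3^2)/(p*y)^2 - 2*a3*(C-1)/(p^2*y) + (C-1)^2/p^2"
      unfolding g1_def g2_def g3_def using p y by (simp add: field_simps power2_eq_square)
    also have "\<dots> = 2*(C-1)/(p*y) - 2*(p-y)*(C-1)/(p^2*y) + (C-1)^2/p^2"
      unfolding A using p y by (simp add: a3 field_simps power2_eq_square)
    also have "\<dots> = (C^2 - 1)/p^2"
      using p y by (simp add: field_simps power2_eq_square)
    finally show ?thesis using CS by (simp add: algebra_simps)
  qed
  have h3: "(g1 + S * v1/p^2)^2 + (g2 + S * v2/p^2)^2 + (g3 + S * v3/p^2)^2 = 0"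
  proof -
    have "(g1 + S * v1/p^2)^2 + (g2 + S * v2/p^2)^2 + (g3 + S * v3/p^2)^2
       = (g1^2+g2^2+g3^2) + 2*S/p^2*(g1 * v1 + g2 * v2 + g3 * v3) + S^2/(p^2*p^2)*(v1^2+v2^2+v3^2)"
      using p by (simp add: field_simps power2_eq_square)
    also have "\<dots> = 0" using h1 h2 V p by (simp add: field_simps power2_eq_square)
    finally show ?thesis .
  qed
  have "g3 + S * v3/p^2 = 0"
    using h3 by (smt (verit) zero_le_power2 zero_eq_power2)  
  then show ?thesis using a3 p y unfolding g3_def by (simp add: field_simps power2_eq_square) 
qed

lemma normsq: "(norm (a::pt3))^2 = (fst a)^2 + (fst (snd a))^2 + (snd (snd a))^2"
  by (cases a) (auto simp: norm_Pair)

lemma jordan: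
  fixes t :: real assumes "0 \<le> t" "t \<le> pi/2" shows "t \<le> 2 * sin t"
proof (cases "t \<le> pi/3")
  case True
  have "(\<lambda>u. 2 * sin u - u) 0 \<le> (\<lambda>u. 2 * sin u - u) t"
  proof (rule DERIV_nonneg_imp_nondecreasing[OF assms(1)])
    fix u assume u: "0 \<le> u" "u \<le> t"
    have "cos (pi/3) \<le> cos u"
      by (rule cos_monotone_0_pi_le) (use u True in auto)
    then have "0 \<le> 2 * cos u - 1" by (simp add: cos_60)
    moreover have "((\<lambda>u. 2 * sin u - u) has_real_derivative 2 * cos u - 1) (at u)"
      by (auto intro!: derivative_eq_intros)
    ultimately show "\<exists>y. ((\<lambda>u. 2 * sin u - u) has_real_derivative y) (at u) \<and> 0 \<le> y" by blast
  qed
  then show ?thesis by simp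
next
  case False
  have "sin (pi/3) \<le> sin t"
    by (rule sin_monotone_2pi_le) (use False assms in auto)
  then have "sqrt 3 \<le> 2 * sin t" by (simp add: sin_60)
  moreover have "1.7 \<le> sqrt 3" by (rule real_le_rsqrt) (simp add: power2_eq_square)
  moreover have "pi \<le> 3.2" using pi_approx by simp
  ultimately show ?thesis using assms by linarith
qed


lemma geo:
  fixes r :: "real \<Rightarrow> pt3" and V :: pt3
  assumes pos: "\<forall>s\<ge>0. in_H3 (r s)"
    and iso: "\<forall>s\<ge>0. \<forall>t\<ge>0. hdist (r s) (r t) = \<bar>s - t\<bar>"
    and der: "(r has_vector_derivative V) (at 0 within {0..})"
  shows "norm V = zc (r 0) \<and> (\<forall>s\<ge>0. zc (r s) * (zc (r 0) * cosh s - snd (snd V) * sinh s) = (zc (r 0))^2)"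
proof -
  define r1 where "r1 = (\<lambda>t. fst (r t))"
  define r2 where "r2 = (\<lambda>t. fst (snd (r t)))"
  define r3 where "r3 = (\<lambda>t. snd (snd (r t)))"
  have zc3: "zc (r t) = r3 t" for t by (simp add: zc_def r3_def)
  have pos3: "t \<ge> 0 \<Longrightarrow> r3 t > 0" for t using pos by (auto simp: in_H3_def zc3)
  have dd: "((\<lambda>t. r t) has_derivative (\<lambda>h. h *\<^sub>R V)) (at 0 within {0..})"
    using der by (simp add: has_vector_derivative_def)
  have "(r1 has_vector_derivative fst V) (at 0 within {0..})"
    using has_derivative_fst[OF dd] by (simp add: has_vector_derivative_def r1_def)
  then have d1: "(r1 has_real_derivative fst V) (at 0 within {0..})"
    by (simp add: has_real_derivative_iff_has_vector_derivative)
  have "(r2 has_vector_derivative fst (snd V)) (at 0 within {0..})"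
    using has_derivative_fst[OF has_derivative_snd[OF dd]] by (simp add: has_vector_derivative_def r2_def)
  then have d2: "(r2 has_real_derivative fst (snd V)) (at 0 within {0..})"
    by (simp add: has_real_derivative_iff_has_vector_derivative)
  have "(r3 has_vector_derivative snd (snd V)) (at 0 within {0..})"
    using has_derivative_snd[OF has_derivative_snd[OF dd]] by (simp add: has_vector_derivative_def r3_def)
  then have d3: "(r3 has_real_derivative snd (snd V)) (at 0 within {0..})"
    by (simp add: has_real_derivative_iff_has_vector_derivative)
  have Q: "1 + ((r1 s - r1 t)^2 + (r2 s - r2 t)^2 + (r3 s - r3 t)^2) / (2 * r3 s * r3 t) = cosh (s - t)"
    if "s \<ge> 0" "t \<ge> 0" for s t
  proof -
    define X where "X = 1 + (norm (r s - r t))\<^sup>2 / (2 * zc (r s) * zc (r t))"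
    have X1: "X \<ge> 1" unfolding X_def using pos3[OF that(1)] pos3[OF that(2)] by (simp add: zc3)
    have "arcosh X = \<bar>s - t\<bar>" using iso that by (simp add: hdist_def X_def)
    then have "cosh \<bar>s - t\<bar> = X" using X1 by (metis cosh_arcosh_real)
    then have "X = cosh (s - t)" by (simp add: cosh_real_abs)
    moreover have "(norm (r s - r t))\<^sup>2 = (r1 s - r1 t)^2 + (r2 s - r2 t)^2 + (r3 s - r3 t)^2"
      by (simp add: normsq r1_def r2_def r3_def)
    ultimately show ?thesis by (simp add: X_def zc3)
  qed
  have l1: "((\<lambda>t. (r1 t - r1 0)/(t - 0)) \<longlongrightarrow> fst V) (at_right 0)"
    using d1 unfolding has_field_derivative_iff by (rule tendsto_within_subset) auto
  have l2: "((\<lambda>t. (r2 t - r2 0)/(t - 0)) \<longlongrightarrow> fst (snd V)) (at_right 0)"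
    using d2 unfolding has_field_derivative_iff by (rule tendsto_within_subset) auto
  have l3: "((\<lambda>t. (r3 t - r3 0)/(t - 0)) \<longlongrightarrow> snd (snd V)) (at_right 0)"
    using d3 unfolding has_field_derivative_iff by (rule tendsto_within_subset) auto
  have c3: "(r3 \<longlongrightarrow> r3 0) (at_right 0)"
    using DERIV_continuous[OF d3] unfolding continuous_within by (rule tendsto_within_subset) auto
  have ch: "((\<lambda>t. (cosh t - 1)/t^2) \<longlongrightarrow> 1/2) (at_right (0::real))"
    by real_asymp
  have L1: "((\<lambda>t. ((r1 t - r1 0)/(t - 0))^2 + ((r2 t - r2 0)/(t - 0))^2 + ((r3 t - r3 0)/(t - 0))^2)
      \<longlongrightarrow> (fst V)^2 + (fst (snd V))^2 + (snd (snd V))^2) (at_right 0)"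
    by (intro tendsto_intros l1 l2 l3)
  have L2: "((\<lambda>t. 2 * r3 0 * r3 t * ((cosh t - 1)/t^2)) \<longlongrightarrow> 2 * r3 0 * r3 0 * (1/2)) (at_right 0)"
    by (intro tendsto_intros c3 ch)
  have ev: "eventually (\<lambda>t. 2 * r3 0 * r3 t * ((cosh t - 1)/t^2) =
       ((r1 t - r1 0)/(t - 0))^2 + ((r2 t - r2 0)/(t - 0))^2 + ((r3 t - r3 0)/(t - 0))^2) (at_right 0)"
  proof (rule eventually_at_rightI[of 0 1])
    fix t :: real assume "t \<in> {0<..<1}"
    then have t: "t > 0" by simp
    have q: "1 + ((r1 0 - r1 t)^2 + (r2 0 - r2 t)^2 + (r3 0 - r3 t)^2) / (2 * r3 0 * r3 t) = cosh t"
      using Q[of 0 t] t by simp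
    have p0: "r3 0 > 0" "r3 t > 0" using pos3 t by auto
    have "(r1 0 - r1 t)^2 + (r2 0 - r2 t)^2 + (r3 0 - r3 t)^2 = 2 * r3 0 * r3 t * (cosh t - 1)"
      using q p0 by (simp add: field_simps)
    then have "(r1 t - r1 0)^2 + (r2 t - r2 0)^2 + (r3 t - r3 0)^2 = 2 * r3 0 * r3 t * (cosh t - 1)"
      by (simp add: power2_commute)
    then show "2 * r3 0 * r3 t * ((cosh t - 1)/t^2) =
       ((r1 t - r1 0)/(t - 0))^2 + ((r2 t - r2 0)/(t - 0))^2 + ((r3 t - r3 0)/(t - 0))^2"
      using t by (simp add: power_divide add_divide_distrib[symmetric])
  qed simp
  have "(fst V)^2 + (fst (snd V))^2 + (snd (snd V))^2 = 2 * r3 0 * r3 0 * (1/2)"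
    using tendsto_unique[OF _ L1 Lim_transform_eventually[OF L2 ev]] by simp
  then have Vsq: "(fst V)^2 + (fst (snd V))^2 + (snd (snd V))^2 = (r3 0)^2"
    by (simp add: power2_eq_square)
  then have "(norm V)^2 = (r3 0)^2" by (simp add: normsq)
  moreover have p30: "r3 0 > 0" using pos3 by simp
  ultimately have nV: "norm V = r3 0"
    by (metis norm_ge_zero power2_eq_iff_nonneg less_imp_le)
  have main: "r3 s * (r3 0 * cosh s - snd (snd V) * sinh s) = (r3 0)^2" if s: "s > 0" for s
  proof -
    define y1 where "y1 = r1 s"
    define y2 where "y2 = r2 s"
    define y3 where "y3 = r3 s"
    define F where "F = (\<lambda>t. 1 + ((r1 t - y1)^2 + (r2 t - y2)^2 + (r3 t - y3)^2) / (2 * r3 t * y3))"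
    define DD where "DD = (2*((r1 0 - y1) * fst V + (r2 0 - y2) * fst (snd V) + (r3 0 - y3) * snd (snd V))*(2*r3 0*y3)
       - ((r1 0 - y1)^2 + (r2 0 - y2)^2 + (r3 0 - y3)^2)*(2 * snd (snd V)*y3))/(2*r3 0*y3)^2"
    have y3: "y3 > 0" using pos3 s by (simp add: y3_def)
    have sub: "{0..s} \<subseteq> {0..}" by auto
    note d1' = has_field_derivative_subset[OF d1 sub]
    note d2' = has_field_derivative_subset[OF d2 sub]
    note d3' = has_field_derivative_subset[OF d3 sub]
    have dF: "(F has_real_derivative DD) (at 0 within {0..s})"
      unfolding F_def DD_def
      apply (rule derivative_eq_intros d1' d2' d3' refl)+
      using p30 y3 apply simp
      apply (rule refl)
      apply (simp only: add_0_left)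
      apply (rule arg_cong2[where f="(/)"])
       apply (simp add: power2_eq_square algebra_simps)
      apply (simp add: power2_eq_square algebra_simps)
      done
    have dF2: "((\<lambda>t. cosh (t - s)) has_real_derivative DD) (at 0 within {0..s})"
    proof (rule has_field_derivative_transform_within[OF dF, of 1])
      fix t assume "t \<in> {0..s}"
      then show "F t = cosh (t - s)" using Q[of t s] s unfolding F_def y1_def y2_def y3_def by simp
    qed (use s in auto)
    have dC: "((\<lambda>t. cosh (t - s)) has_real_derivative - sinh s) (at 0 within {0..s})"
      by (auto intro!: derivative_eq_intros)
    have "DD = - sinh s"
      using vector_derivative_unique_within[of 0 "{0..s}"] dF2 dC s
      by (simp add: has_real_derivative_iff_has_vector_derivative at_within_Icc_at_right)
    moreover have "(r1 0 - y1)^2 + (r2 0 - y2)^2 + (r3 0 - y3)^2 = 2 * r3 0 * y3 * (cosh s - 1)"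
    proof -
      have "1 + ((r1 0 - y1)^2 + (r2 0 - y2)^2 + (r3 0 - y3)^2) / (2 * r3 0 * y3) = cosh s"
        using Q[of 0 s] s unfolding y1_def y2_def y3_def by simp
      then show ?thesis using p30 y3 by (simp add: field_simps)
    qed
    ultimately have "y3 * (r3 0 * cosh s - sinh s * snd (snd V)) = (r3 0)^2"
      using alg[of "r3 0" y3 "r1 0 - y1" "r2 0 - y2" "r3 0 - y3" "cosh s" "fst V" "fst (snd V)" "snd (snd V)" "sinh s"]
        p30 y3 Vsq cosh_square_eq[of s] unfolding DD_def by simp
    then show ?thesis by (simp add: y3_def mult.commute)
  qed
  have "zc (r s) * (zc (r 0) * cosh s - snd (snd V) * sinh s) = (zc (r 0))^2" if "s \<ge> 0" for s
  proof (cases "s = 0")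
    case True then show ?thesis by (simp add: power2_eq_square)
  next
    case False then show ?thesis using main[of s] that by (simp add: zc3)
  qed
  then show ?thesis using nV by (simp add: zc3)
qed


lemma sinh_half: fixes a :: real assumes "a > 0" shows "a/2 < sinh a"
proof -
  have "1 + a \<le> exp a" by (rule exp_ge_add_one_self)
  moreover have "exp (-a) < 1" using assms by simp
  moreover have "sinh a = (exp a - exp (-a))/2" by (simp add: sinh_def)
  ultimately show ?thesis by argo
qed

lemma two_cosh: fixes x :: real shows "\<bar>x\<bar> < 2 * cosh x"
proof -
  have "1 + \<bar>x\<bar> \<le> exp \<bar>x\<bar>" by (rule exp_ge_add_one_self)
  moreover have "exp (- \<bar>x\<bar>) > 0" by simp
  moreover have "2 * cosh \<bar>x\<bar> = exp \<bar>x\<bar> + exp (- \<bar>x\<bar>)" by (simp add: cosh_def)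
  moreover have "cosh x = cosh \<bar>x\<bar>" by (simp add: cosh_real_abs)
  ultimately show ?thesis by (smt (verit))
qed

lemma cos_one_zero: fixes t :: real assumes "cos t = 1" "\<bar>t\<bar> \<le> pi" shows "t = 0"
proof -
  obtain n :: int where n: "t = real_of_int n * 2 * pi" using assms(1) cos_one_2pi_int by blast
  then have "\<bar>real_of_int n\<bar> * 2 * pi \<le> pi" using assms(2) by (simp add: abs_mult)
  then have "\<bar>real_of_int n\<bar> * 2 \<le> 1" using pi_gt_zero
    by (metis mult_le_cancel_right2)
  then have "n = 0" by linarith
  then show ?thesis using n by simp
qed

theorem lemma5p8:
  fixes c1 c2 u1 u2 x \<theta> :: real and r :: "real \<Rightarrow> pt3"
  assumes "u1\<^sup>2 + u2\<^sup>2 = 1"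
    and "\<bar>\<theta>\<bar> \<le> pi"
    and "(x, \<theta>) \<noteq> (0, 0)"
    and "geodesic_ray r (nb_base c1 c2 u1 u2 x) (nb_dir u1 u2 x \<theta>)"
  shows "\<bar>x\<bar> < 2 * exp (- ray_top_height r)
       \<and> (ray_top_height r > 0 \<longrightarrow> \<bar>\<theta>\<bar> \<le> 2 * exp (- ray_top_height r))"
proof -
  define w where "w = nb_dir u1 u2 x \<theta>"
  define ch where "ch = cosh x"
  have ch1: "ch \<ge> 1" unfolding ch_def by (rule cosh_real_ge_1)
  obtain k where k: "k > 0" and der: "(r has_vector_derivative (k *\<^sub>R w)) (at 0 within {0..})"
    and r0: "r 0 = nb_base c1 c2 u1 u2 x" and pos: "\<forall>s\<ge>0. in_H3 (r s)"
    and iso: "\<forall>s\<ge>0. \<forall>t\<ge>0. hdist (r s) (r t) = \<bar>s - t\<bar>"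
    using assms(4) unfolding geodesic_ray_def w_def by blast
  note G = geo[OF pos iso der]
  have zc0: "zc (r 0) = 1/ch" by (simp add: r0 nb_base_def gam_def zc_def ch_def)
  have wsq: "(fst w)^2 + (fst (snd w))^2 + (snd (snd w))^2
     = (cos \<theta>)^2 * (tanh x)^2 * (u1^2+u2^2) + (sin \<theta>)^2 * (u1^2+u2^2) + (cos \<theta>)^2 * (1/ch)^2"
    by (simp add: w_def nb_dir_def nv_def nh_def ch_def power2_eq_square algebra_simps)
  have th: "(tanh x)^2 + (1/ch)^2 = 1"
  proof -
    have "(tanh x)^2 + (1/ch)^2 = ((sinh x)^2 + 1) / ch^2"
      using ch1 by (simp add: tanh_def ch_def power_divide add_divide_distrib)
    also have "\<dots> = 1" using ch1 by (simp add: ch_def cosh_square_eq[symmetric])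
    finally show ?thesis .
  qed
  have "(fst w)^2 + (fst (snd w))^2 + (snd (snd w))^2 = (cos \<theta>)^2 * ((tanh x)^2 + (1/ch)^2) + (sin \<theta>)^2"
    unfolding wsq assms(1) by (simp add: algebra_simps)
  then have "(norm w)^2 = 1" unfolding normsq th by simp
  then have nw: "norm w = 1" by (smt (verit) norm_ge_zero power2_eq_1_iff)
  have kval: "k = 1/ch" using G nw k by (simp add: zc0)
  define c where "c = cos \<theta> / ch"
  have w3: "snd (snd w) = cos \<theta> / ch"
    by (simp add: w_def nb_dir_def nv_def nh_def ch_def)
  have V3: "snd (snd (k *\<^sub>R w)) = cos \<theta> / ch^2"
    by (simp add: kval w_def nb_dir_def nv_def nh_def ch_def power2_eq_square)
  have zs: "zc (r s) * (cosh s - c * sinh s) = 1/ch" if "s \<ge> 0" for s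
  proof -
    have "zc (r s) * (1/ch * cosh s - cos \<theta> / ch^2 * sinh s) = (1/ch)^2"
      using G that by (simp add: zc0 kval w3 power2_eq_square)
    then have "ch^2 * (zc (r s) * (1/ch * cosh s - cos \<theta> / ch^2 * sinh s)) = ch^2 * (1/ch)^2" by simp
    moreover have "ch^2 * (zc (r s) * (1/ch * cosh s - cos \<theta> / ch^2 * sinh s)) = ch * (zc (r s) * (cosh s - c * sinh s))"
      using ch1 unfolding c_def by (simp add: field_simps power2_eq_square)
    moreover have "ch^2 * (1/ch)^2 = 1" using ch1 by (simp add: field_simps power2_eq_square)
    ultimately have "ch * (zc (r s) * (cosh s - c * sinh s)) = 1" by simp
    then show ?thesis using ch1 by (simp add: field_simps)
  qed
  have "\<bar>cos \<theta>\<bar> \<le> ch" using abs_cos_le_one[of \<theta>] ch1 by linarith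
  then have cle: "\<bar>c\<bar> \<le> 1" using ch1 unfolding c_def
    by (simp add: abs_div divide_le_eq_1)
  have cne: "c \<noteq> 1"
  proof
    assume "c = 1"
    then have e: "cos \<theta> = ch" using ch1 by (simp add: c_def field_simps)
    then have "ch = 1" using ch1 cos_le_one[of \<theta>] by simp
    then have "x = 0" by (simp add: ch_def cosh_real_one_iff)
    moreover have "\<theta> = 0" using e \<open>ch = 1\<close> assms(2) cos_one_zero by simp
    ultimately show False using assms(3) by simp
  qed
  define m where "m = (if c > 0 then sqrt (1 - c^2) else 1)"
  have mpos: "m > 0"
  proof (cases "c > 0")
    case True
    then have "c < 1" using cle cne by simp
    then have "c^2 < 1" using True by (simp add: power2_eq_square) (metis True mult_less_cancel_right1 mult_strict_mono' less_imp_le mult.right_neutral)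
    then show ?thesis using True by (simp add: m_def)
  qed (simp add: m_def)
  have Xb: "cosh s - c * sinh s \<ge> m" if s: "s \<ge> 0" for s
  proof (cases "c > 0")
    case True
    have sh: "sinh s \<ge> 0" using s by simp
    have "cosh s - c * sinh s \<ge> cosh s - sinh s"
      using cle sh mult_right_mono[of c 1 "sinh s"] by simp
    moreover have "cosh s - sinh s > 0" using sinh_less_cosh_real[of s] by simp
    ultimately have Xp: "cosh s - c * sinh s \<ge> 0" by simp
    have "(cosh s - c * sinh s)^2 - (1 - c^2) * ((cosh s)^2 - (sinh s)^2) = (sinh s - c * cosh s)^2"
      by (simp add: power2_eq_square algebra_simps)
    moreover have "(cosh s)^2 - (sinh s)^2 = 1" by (simp add: cosh_square_eq)
    ultimately have "(cosh s - c * sinh s)^2 - (1 - c^2) = (sinh s - c * cosh s)^2" by simp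
    then have "(cosh s - c * sinh s)^2 \<ge> 1 - c^2"
      using zero_le_power2[of "sinh s - c * cosh s"] by linarith
    then have "sqrt (1 - c^2) \<le> sqrt ((cosh s - c * sinh s)^2)" by (rule real_sqrt_le_mono)
    then show ?thesis using Xp True by (simp add: m_def)
  next
    case False
    have "sinh s \<ge> 0" using s by simp
    then have "- c * sinh s \<ge> 0" using False by (simp add: mult_nonpos_nonneg)
    then show ?thesis using False cosh_real_ge_1[of s] by (simp add: m_def)
  qed
  define H where "H = ln ((1/ch)/m)"
  have hs: "height (r s) \<le> H" if s: "s \<ge> 0" for s
  proof -
    have zp: "zc (r s) > 0" using pos s by (simp add: in_H3_def)
    have Xp: "cosh s - c * sinh s > 0" using Xb[OF s] mpos by simp
    have "zc (r s) = (1/ch) / (cosh s - c * sinh s)" using zs[OF s] Xp by (subst eq_divide_eq) simp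
    also have "\<dots> \<le> (1/ch)/m" using Xb[OF s] mpos ch1
      by (intro divide_left_mono) auto
    finally show ?thesis unfolding height_def H_def using zp by (intro ln_mono) auto
  qed
  have hle: "ray_top_height r \<le> H"
    unfolding ray_top_height_def by (rule cSUP_least) (use hs in auto)
  have E: "ch * m \<le> exp (- ray_top_height r)"
  proof -
    have "exp (- H) \<le> exp (- ray_top_height r)" using hle by simp
    moreover have "exp (- H) = ch * m" using mpos ch1 unfolding H_def
      by (simp add: exp_minus)
    ultimately show ?thesis by simp
  qed
  show ?thesis
  proof (cases "c > 0")
    case False
    then have m1: "m = 1" by (simp add: m_def)
    have A: "\<bar>x\<bar> < 2 * exp (- ray_top_height r)" using two_cosh[of x] E m1 by (simp add: ch_def)
    have "H \<le> 0" using ch1 m1 unfolding H_def by simp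
    then show ?thesis using A hle by simp
  next
    case True
    have m: "m = sqrt (1 - c^2)" using True by (simp add: m_def)
    have chm: "ch * m = sqrt (ch^2 - (cos \<theta>)^2)"
    proof -
      have "ch * m = sqrt (ch^2) * sqrt (1 - c^2)" using ch1 by (simp add: m)
      also have "\<dots> = sqrt (ch^2 * (1 - c^2))" by (simp add: real_sqrt_mult)
      also have "ch^2 * (1 - c^2) = ch^2 - (cos \<theta>)^2" using ch1
        by (simp add: c_def field_simps power2_eq_square)
      finally show ?thesis .
    qed
    have cs: "ch^2 - (cos \<theta>)^2 = (sinh x)^2 + (sin \<theta>)^2"
      using cosh_square_eq[of x] sin_cos_squared_add[of \<theta>] unfolding ch_def by linarith
    have cpos: "cos \<theta> > 0" using True ch1 by (simp add: c_def zero_less_divide_iff)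
    have A: "\<bar>x\<bar> < 2 * exp (- ray_top_height r)"
    proof -
      have "(\<bar>x\<bar>/2)^2 < ch^2 - (cos \<theta>)^2"
      proof (cases "x = 0")
        case True
        have "cos \<theta> \<noteq> 1" using cos_one_zero[OF _ assms(2)] assms(3) True by auto
        then have "(sin \<theta>)^2 > 0"
        proof -
          have "(cos \<theta>)^2 \<noteq> 1" using \<open>cos \<theta> \<noteq> 1\<close> cpos by (simp add: power2_eq_1_iff)
          then have "(sin \<theta>)^2 \<noteq> 0" using sin_cos_squared_add[of \<theta>] by linarith
          then show ?thesis by simp
        qed
        then show ?thesis using cs True by simp
      next
        case False
        have "\<bar>x\<bar>/2 < sinh \<bar>x\<bar>" using sinh_half[of "\<bar>x\<bar>"] False by simp
        then have "(\<bar>x\<bar>/2)^2 < (sinh \<bar>x\<bar>)^2"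
          by (intro power_strict_mono) auto
        then have "(\<bar>x\<bar>/2)^2 < (sinh x)^2" by (simp add: power2_abs)
        then show ?thesis using cs zero_le_power2[of "sin \<theta>"] by linarith
      qed
      then have "\<bar>x\<bar>/2 < sqrt (ch^2 - (cos \<theta>)^2)" by (rule real_less_rsqrt)
      then show ?thesis using E chm by simp
    qed
    have tb: "\<bar>\<theta>\<bar> \<le> pi/2"
    proof (rule ccontr)
      assume "\<not> \<bar>\<theta>\<bar> \<le> pi/2"
      then have "cos \<bar>\<theta>\<bar> \<le> cos (pi/2)"
        by (intro cos_monotone_0_pi_le) (use assms(2) in auto)
      then show False using cpos by simp
    qed
    have "\<bar>\<theta>\<bar> \<le> 2 * sin \<bar>\<theta>\<bar>" using jordan[of "\<bar>\<theta>\<bar>"] tb by simp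
    also have "sin \<bar>\<theta>\<bar> = \<bar>sin \<theta>\<bar>"
      using sin_ge_zero[of "\<bar>\<theta>\<bar>"] assms(2) by (cases "\<theta> \<ge> 0") auto
    also have "\<bar>sin \<theta>\<bar> = sqrt ((sin \<theta>)^2)" by simp
    also have "\<dots> \<le> sqrt (ch^2 - (cos \<theta>)^2)"
      using cs by (intro real_sqrt_le_mono) simp
    finally have "\<bar>\<theta>\<bar> \<le> 2 * exp (- ray_top_height r)" using E chm by simp
    then show ?thesis using A by simp
  qed
qed

end
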